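(* Let $n\geq 2$ and $m=\lfloor n/2\rfloor$. For every future-directed null vector $\zeta\in\mathbb{R}^{n,1}$ there exists $a\in\mathbb{C}^{2^m}$ with $\zeta=\zeta_a$, where $$\zeta_a=\sum_{j=1}^n\langle\sqrt{-1}\,c(e_j)a,a\rangle e_j+|a|^2e_0 .$$
   Context: $\mathbb{R}^{n,1}$ is Minkowski space with orthonormal basis $e_0=\partial/\partial t$, $e_j=\partial/\partial x_j$ ($1\le j\le n$) and metric $\sum dx_j^2-dt^2$; a future-directed null vector is a nonzero $\zeta$ with $\zeta\cdot\zeta=0$ and positive $e_0$-component. $\langle\cdot,\cdot\rangle$ is the standard Hermitian inner product on $\mathbb{C}^{2^m}$. The $c(e_j)$ are Baum's Clifford matrices: with $g_1=\begin{pmatrix}\sqrt{-1}&0\\0&-\sqrt{-1}\end{pmatrix}$, $g_2=\begin{pmatrix}0&\sqrt{-1}\\\sqrt{-1}&0\end{pmatrix}$, $T=\begin{pmatrix}0&-\sqrt{-1}\\\sqrt{-1}&0\end{pmatrix}$, $E=I_2$, set $c(e_{2j-1})=E\otimes\cdots\otimes E\otimes g_1\otimes T\otimes\cdots\otimes T$, $c(e_{2j})=E\otimes\cdots\otimes E\otimes g_2\otimes T\otimes\cdots\otimes T$ for $1\le j\le m$ ($j-1$ factors $E$, $m$ factors in total), and, if $n=2m+1$, $c(e_n)=\sqrt{-1}\,T\otimes\cdots\otimes T$ ($m$ factors). (For $n=3$ these are $g_1,g_2,\sqrt{-1}T$; for $n=2$ they are $g_1,g_2$.) *)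

theory Defs
  imports Complex_Main
begin

text \<open>Square complex matrices of size d are represented as functions nat \<Rightarrow> nat \<Rightarrow> complex,
  with only the entries with indices below d being relevant; vectors in C^d as
  functions nat \<Rightarrow> complex, only indices below d relevant.\<close>

type_synonym cmat = "nat \<Rightarrow> nat \<Rightarrow> complex"
type_synonym cvec = "nat \<Rightarrow> complex"

definition mat2 :: "complex \<Rightarrow> complex \<Rightarrow> complex \<Rightarrow> complex \<Rightarrow> cmat" where
  "mat2 a b c d = (\<lambda>i j. if i = 0 \<and> j = 0 then a else if i = 0 \<and> j = 1 then b
                          else if i = 1 \<and> j = 0 then c else if i = 1 \<and> j = 1 then d else 0)"

definition g1 :: cmat where "g1 = mat2 \<i> 0 0 (-\<i>)"
definition g2 :: cmat where "g2 = mat2 0 \<i> \<i> 0"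
definition Tm :: cmat where "Tm = mat2 0 (-\<i>) \<i> 0"
definition Em :: cmat where "Em = mat2 1 0 0 1"

definition kron :: "nat \<Rightarrow> cmat \<Rightarrow> cmat \<Rightarrow> cmat" where
  "kron q A B = (\<lambda>i j. A (i div q) (j div q) * B (i mod q) (j mod q))"

fun tensor_list :: "cmat list \<Rightarrow> cmat" where
  "tensor_list [] = (\<lambda>i j. if i = 0 \<and> j = 0 then 1 else 0)"
| "tensor_list (A # As) = kron (2 ^ length As) A (tensor_list As)"

text \<open>Baum's Clifford matrices c(e_j), 1 \<le> j \<le> n, of size 2^m with m = n div 2.\<close>
definition cliff :: "nat \<Rightarrow> nat \<Rightarrow> cmat" where
  "cliff n j = (let m = n div 2 in
     if odd n \<and> j = n then (\<lambda>a b. \<i> * tensor_list (replicate m Tm) a b)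
     else if odd j then
       tensor_list (replicate ((j + 1) div 2 - 1) Em @ [g1] @ replicate (m - (j + 1) div 2) Tm)
     else
       tensor_list (replicate (j div 2 - 1) Em @ [g2] @ replicate (m - j div 2) Tm))"

definition mat_vec :: "nat \<Rightarrow> cmat \<Rightarrow> cvec \<Rightarrow> cvec" where
  "mat_vec d M a = (\<lambda>i. \<Sum>k<d. M i k * a k)"

definition herm :: "nat \<Rightarrow> cvec \<Rightarrow> cvec \<Rightarrow> complex" where
  "herm d u v = (\<Sum>k<d. u k * cnj (v k))"

definition sqnorm :: "nat \<Rightarrow> cvec \<Rightarrow> real" where
  "sqnorm d a = (\<Sum>k<d. (cmod (a k))^2)"

text \<open>A vector of R^{n,1} is given by its e_0-component t and spatial components x 1, ..., x n.
  Future-directed null: sum x_j^2 - t^2 = 0, (t,x) nonzero, t > 0.\<close>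
definition future_null :: "nat \<Rightarrow> real \<Rightarrow> (nat \<Rightarrow> real) \<Rightarrow> bool" where
  "future_null n t x \<longleftrightarrow> (\<Sum>j=1..n. (x j)^2) - t^2 = 0 \<and> (t \<noteq> 0 \<or> (\<exists>j\<in>{1..n}. x j \<noteq> 0)) \<and> t > 0"

end

theory Submission
  imports Defs
begin

lemma sum_split2:
  assumes "0 < (q::nat)"
  shows "(\<Sum>k<2*q. f k) = (\<Sum>k<q. f k) + (\<Sum>k<q. f (q+k))"
proof -
  have "(\<Sum>k<2*q. f k) = sum f {0..<q} + sum f {q..<q+q}"
    by (simp add: sum.atLeastLessThan_concat mult_2 atLeast0LessThan[symmetric])
  also have "sum f {q..<q+q} = (\<Sum>k<q. f (q+k))"
    using sum.shift_bounds_nat_ivl[of f 0 q q] by (simp add: atLeast0LessThan add.commute)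
  finally show ?thesis by (simp add: atLeast0LessThan)
qed

definition pv :: "nat \<Rightarrow> cvec \<Rightarrow> cvec \<Rightarrow> cvec" where
  "pv q v b = (\<lambda>i. v (i div q) * b (i mod q))"

lemma mat_vec_kron:
  assumes "0 < q"
  shows "mat_vec (2*q) (kron q A B) (pv q v b) = pv q (mat_vec 2 A v) (mat_vec q B b)"
proof
  fix i
  have "mat_vec (2*q) (kron q A B) (pv q v b) i
     = (\<Sum>k<q. A (i div q) 0 * B (i mod q) k * (v 0 * b k))
     + (\<Sum>k<q. A (i div q) 1 * B (i mod q) k * (v 1 * b k))"
    unfolding mat_vec_def kron_def pv_def using assms
    by (simp add: sum_split2)
  also have "\<dots> = pv q (mat_vec 2 A v) (mat_vec q B b) i"
    unfolding pv_def mat_vec_def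
    by (simp add: numeral_2_eq_2 lessThan_Suc sum_distrib_left sum_distrib_right
        sum.distrib[symmetric] algebra_simps)
  finally show "mat_vec (2*q) (kron q A B) (pv q v b) i = pv q (mat_vec 2 A v) (mat_vec q B b) i" .
qed

lemma herm_pv:
  assumes "0 < q"
  shows "herm (2*q) (pv q u w) (pv q v b) = herm 2 u v * herm q w b"
proof -
  have "herm (2*q) (pv q u w) (pv q v b) = (\<Sum>k<q. u 0 * w k * cnj (v 0 * b k)) + (\<Sum>k<q. u 1 * w k * cnj (v 1 * b k))"
    unfolding herm_def pv_def using assms by (simp add: sum_split2)
  also have "\<dots> = herm 2 u v * herm q w b"
    unfolding herm_def
    by (simp add: numeral_2_eq_2 lessThan_Suc sum_distrib_left sum_distrib_right
        sum.distrib[symmetric] algebra_simps)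
  finally show ?thesis .
qed

lemma mat_vec_scal: "mat_vec d (\<lambda>p r. c * M p r) a = (\<lambda>i. c * mat_vec d M a i)"
  unfolding mat_vec_def by (simp add: sum_distrib_left mult.assoc)

lemma herm_scal: "herm d (\<lambda>k. c * u k) v = c * herm d u v"
  unfolding herm_def by (simp add: sum_distrib_left mult.assoc)

lemma pv_scal: "(\<lambda>i. c * pv q u w i) = pv q (\<lambda>k. c * u k) w"
  unfolding pv_def by (simp add: mult.assoc)

lemma sqnorm_herm: "complex_of_real (sqnorm d a) = herm d a a"
  unfolding sqnorm_def herm_def of_real_sum by (simp add: complex_norm_square[symmetric])

abbreviation TT :: "nat \<Rightarrow> cmat" where "TT m \<equiv> tensor_list (replicate m Tm)"

lemma len_aux: "length (replicate a Em @ [g] @ replicate b Tm) = a + 1 + b" by simp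

lemma cliff1: "cliff (2*m+3) 1 = kron (2^m) g1 (TT m)"
  unfolding cliff_def Let_def by simp

lemma cliff2: "cliff (2*m+3) 2 = kron (2^m) g2 (TT m)"
  unfolding cliff_def Let_def by simp

lemma cliffn: "cliff (2*m+3) (2*m+3) = (\<lambda>p r. \<i> * kron (2^m) Tm (TT m) p r)"
proof -
  have "(2*m+3) div 2 = Suc m" by simp
  then show ?thesis unfolding cliff_def Let_def by simp
qed

lemma cliffn': "cliff (2*m+1) (2*m+1) = (\<lambda>p r. \<i> * TT m p r)"
  unfolding cliff_def Let_def by simp

lemma cliff_odd:
  assumes "1 \<le> k" "k \<le> m"
  shows "cliff (2*m+3) (2*k+1) = kron (2^m) Em (cliff (2*m+1) (2*k-1))"
proof -
  have a: "(2*m+3) div 2 = Suc m" "(2*m+1) div 2 = m" "(2*k+1+1) div 2 = Suc k" "(2*k-1+1) div 2 = k"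
    using assms by auto
  have b: "odd (2*k-1)" "2*k-1 \<noteq> 2*m+1" "2*k+1 \<noteq> 2*m+3" using assms by auto
  have c: "replicate k Em = Em # replicate (k-1) Em" using assms by (cases k) auto
  have d: "length (replicate (k-1) Em @ [g1] @ replicate (m-k) Tm) = m" using assms by simp
  show ?thesis unfolding cliff_def Let_def a using b c d by simp
qed

lemma cliff_even0:
  assumes "k' \<le> m - 1" "1 \<le> m"
  shows "cliff (2*m+3) (2*k'+4) = kron (2^m) Em (cliff (2*m+1) (2*k'+2))"
proof -
  have a: "(2*m+3) div 2 = Suc m" "(2*m+1) div 2 = m" "(2*k'+4) div 2 = Suc (Suc k')" "(2*k'+2) div 2 = Suc k'"
    by auto
  have b: "even (2*k'+2)" "2*k'+2 \<noteq> 2*m+1" "2*k'+4 \<noteq> 2*m+3" "even (2*k'+4)" by presburger+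
  have d: "length (replicate k' Em @ [g2] @ replicate (m - Suc k') Tm) = m" using assms by simp
  have e: "Suc m - Suc (Suc k') = m - Suc k'" by simp
  show ?thesis unfolding cliff_def Let_def a using b d e by simp
qed

lemma cliff_even:
  assumes "2 \<le> k" "k \<le> m+1"
  shows "cliff (2*m+3) (2*k) = kron (2^m) Em (cliff (2*m+1) (2*k-2))"
proof -
  obtain k' where k: "k = k' + 2" using assms by (metis add.commute le_Suc_ex)
  have "k' \<le> m - 1" "1 \<le> m" using assms k by auto
  moreover have "2*k = 2*k'+4" "2*k-2 = 2*k'+2" using k by auto
  ultimately show ?thesis using cliff_even0 by metis
qed

definition Z :: "nat \<Rightarrow> nat \<Rightarrow> cvec \<Rightarrow> complex" where
  "Z n j a = herm (2 ^ (n div 2)) (mat_vec (2 ^ (n div 2)) (\<lambda>p q. \<i> * cliff n j p q) a) a"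

lemma pow_aux: "(2::nat) ^ ((2*m+3) div 2) = 2 * 2^m" "(2*m+1) div 2 = m"
proof -
  have "(2*m+3) div 2 = Suc m" by simp
  then show "(2::nat) ^ ((2*m+3) div 2) = 2 * 2^m" by simp
qed simp

lemma Zpv:
  assumes "cliff (2*m+3) j = kron (2^m) A B"
  shows "Z (2*m+3) j (pv (2^m) v b) = herm 2 (mat_vec 2 A v) v * herm (2^m) (mat_vec (2^m) (\<lambda>p r. \<i> * B p r) b) b"
  unfolding Z_def pow_aux assms mat_vec_scal herm_scal
  by (simp add: mat_vec_kron herm_pv)

lemma Zpvn:
  shows "Z (2*m+3) (2*m+3) (pv (2^m) v b) = \<i> * herm 2 (mat_vec 2 Tm v) v * herm (2^m) (mat_vec (2^m) (\<lambda>p r. \<i> * TT m p r) b) b"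
  unfolding Z_def pow_aux cliffn mat_vec_scal herm_scal
  apply (simp add: mat_vec_kron herm_pv mult.assoc)
  by (metis complex_i_mult_minus mult.left_commute)

lemma Zn': "Z (2*m+1) (2*m+1) b = \<i> * herm (2^m) (mat_vec (2^m) (\<lambda>p r. \<i> * TT m p r) b) b"
  unfolding Z_def pow_aux cliffn' mat_vec_scal herm_scal by simp

lemma sq_pv: "complex_of_real (sqnorm (2^((2*m+3) div 2)) (pv (2^m) v b)) = herm 2 v v * complex_of_real (sqnorm (2^m) b)"
  unfolding pow_aux sqnorm_herm by (simp add: herm_pv)

lemma H2:
  fixes v :: cvec
  shows "herm 2 (mat_vec 2 g1 v) v = \<i> * (v 0 * cnj (v 0) - v 1 * cnj (v 1))"
    "herm 2 (mat_vec 2 g2 v) v = \<i> * (v 0 * cnj (v 1) + v 1 * cnj (v 0))"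
    "herm 2 (mat_vec 2 Tm v) v = \<i> * (v 0 * cnj (v 1) - v 1 * cnj (v 0))"
    "herm 2 (mat_vec 2 Em v) v = v 0 * cnj (v 0) + v 1 * cnj (v 1)"
    "herm 2 v v = v 0 * cnj (v 0) + v 1 * cnj (v 1)"
  unfolding herm_def mat_vec_def g1_def g2_def Tm_def Em_def mat2_def
  by (simp_all add: numeral_2_eq_2 lessThan_Suc algebra_simps)

lemma bloch:
  fixes p q u r :: real
  assumes r: "r \<ge> 0" and h: "p^2 + q^2 + u^2 = r^2"
  shows "\<exists>v0 v1. v0*cnj v0 - v1*cnj v1 = of_real p \<and> v0*cnj v1 + v1*cnj v0 = of_real q
     \<and> v0*cnj v1 - v1*cnj v0 = - \<i> * of_real u \<and> v0*cnj v0 + v1*cnj v1 = of_real r"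
proof (cases "r + p = 0")
  case True
  then have "r = -p" by linarith
  then have "q^2 + u^2 = 0" using h by simp
  then have "q = 0" "u = 0" by (simp_all add: sum_power2_eq_zero_iff)
  then show ?thesis using True r
    by (intro exI[of _ 0] exI[of _ "of_real (sqrt r)"]) (simp add: complex_eq_iff power2_eq_square[symmetric])
next
  case False
  have "p^2 \<le> r^2" using h by (smt (verit) zero_le_power2)
  then have "\<bar>p\<bar> \<le> r" using r by (metis abs_le_square_iff abs_of_nonneg)
  then have rp: "r + p > 0" using False by linarith
  define c where "c = sqrt ((r+p)/2)"
  have c0: "c > 0" using rp c_def by simp
  have c2: "c^2 = (r+p)/2" using rp c_def by simp
  have qu: "q^2 + u^2 = (r-p)*(r+p)" using h by (simp add: algebra_simps power2_eq_square)
  have e: "(q/(2*c))^2 + (u/(2*c))^2 = (r-p)/2"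
  proof -
    have "(q/(2*c))^2 + (u/(2*c))^2 = (q^2+u^2)/(4*c^2)" using c0
      by (simp add: power_divide add_divide_distrib power_mult_distrib)
    also have "\<dots> = (r-p)*(r+p)/(2*(r+p))" using qu c2 by simp
    also have "\<dots> = (r-p)/2" using rp by (simp add: field_simps)
    finally show ?thesis .
  qed
  define v0 :: complex where "v0 = of_real c"
  define v1 where "v1 = Complex (q/(2*c)) (u/(2*c))"
  have 1: "v0*cnj v0 - v1*cnj v1 = of_real p"
    using e c2 unfolding v0_def v1_def by (simp add: complex_eq_iff power2_eq_square[symmetric] algebra_simps)
  have 2: "v0*cnj v0 + v1*cnj v1 = of_real r"
    using e c2 unfolding v0_def v1_def by (simp add: complex_eq_iff power2_eq_square[symmetric] algebra_simps)
  have 3: "v0*cnj v1 + v1*cnj v0 = of_real q"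
    using c0 unfolding v0_def v1_def by (simp add: complex_eq_iff)
  have 4: "v0*cnj v1 - v1*cnj v0 = - \<i> * of_real u"
    using c0 unfolding v0_def v1_def by (simp add: complex_eq_iff)
  show ?thesis using 1 2 3 4 by blast
qed

lemma Zmid:
  assumes "3 \<le> j" "j \<le> 2*m+2"
  shows "Z (2*m+3) j (pv (2^m) v b) = herm 2 (mat_vec 2 Em v) v * Z (2*m+1) (j-2) b"
proof (cases "odd j")
  case True
  then obtain k where k: "j = 2*k+1" by (metis oddE)
  have "1 \<le> k" "k \<le> m" using assms k by auto
  from Zpv[OF cliff_odd[OF this]] show ?thesis using k
    by (simp add: Z_def pow_aux)
next
  case False
  then obtain k where k: "j = 2*k" by (metis evenE)
  have "2 \<le> k" "k \<le> m+1" using assms k by auto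
  from Zpv[OF cliff_even[OF this]] show ?thesis using k
    by (simp add: Z_def pow_aux)
qed

lemma step:
  fixes b :: cvec and x :: "nat \<Rightarrow> real"
  assumes r: "r \<ge> 0" and tb: "t = r * sqnorm (2^m) b"
    and sb: "Z (2*m+1) (2*m+1) b = of_real s"
    and xb: "\<forall>j\<in>{1..2*m}. of_real r * Z (2*m+1) j b = of_real (x (j+2))"
    and hx: "(x 1)^2 + (x 2)^2 + (x (2*m+3))^2 = s^2 * r^2"
  shows "\<exists>a. (\<forall>j\<in>{1..2*m+3}. complex_of_real (x j) = Z (2*m+3) j a) \<and> t = sqnorm (2^((2*m+3) div 2)) a"
proof -
  obtain p q u where pqu: "p^2+q^2+u^2 = r^2" and xs: "x 1 = s*p" "x 2 = s*q" "x (2*m+3) = s*u"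
  proof (cases "s = 0")
    case True
    then have h0: "(x 1)^2 + (x 2)^2 + (x (2*m+3))^2 = 0" using hx by simp
    have "(x 1)^2 = 0 \<and> (x 2)^2 = 0 \<and> (x (2*m+3))^2 = 0"
      using h0 zero_le_power2[of "x 1"] zero_le_power2[of "x 2"] zero_le_power2[of "x (2*m+3)"] by linarith
    then have "x 1 = 0 \<and> x 2 = 0 \<and> x (2*m+3) = 0" by simp
    then show ?thesis using that[of r 0 0] True by simp
  next
    case False
    have "(x 1/s)^2 + (x 2/s)^2 + (x (2*m+3)/s)^2 = ((x 1)^2 + (x 2)^2 + (x (2*m+3))^2)/s^2"
      by (simp add: power_divide add_divide_distrib)
    also have "\<dots> = r^2" using hx False by simp
    finally show ?thesis using that[of "x 1/s" "x 2/s" "x (2*m+3)/s"] False by simp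
  qed
  obtain v0 v1 where vv: "v0*cnj v0 - v1*cnj v1 = of_real p" "v0*cnj v1 + v1*cnj v0 = of_real q"
     "v0*cnj v1 - v1*cnj v0 = - \<i> * of_real u" "v0*cnj v0 + v1*cnj v1 = of_real r"
    using bloch[OF r pqu] by blast
  define v :: cvec where "v = (\<lambda>k. if k = 0 then v0 else v1)"
  have v01: "v 0 = v0" "v 1 = v1" "v (Suc 0) = v1" unfolding v_def by simp_all
  define W where "W = herm (2^m) (mat_vec (2^m) (\<lambda>p r. \<i> * TT m p r) b) b"
  have iW: "\<i> * W = of_real s" using sb Zn' W_def by simp
  define a where "a = pv (2^m) v b"
  have "\<forall>j\<in>{1..2*m+3}. complex_of_real (x j) = Z (2*m+3) j a"
  proof
    fix j assume j: "j \<in> {1..2*m+3}"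
    consider "j = 1" | "j = 2" | "j = 2*m+3" | "3 \<le> j \<and> j \<le> 2*m+2" using j by fastforce
    then show "complex_of_real (x j) = Z (2*m+3) j a"
    proof cases
      case 1
      have "Z (2*m+3) j a = \<i> * (v0*cnj v0 - v1*cnj v1) * W"
        using Zpv[OF cliff1] 1 unfolding a_def W_def H2 by (simp add: v01)
      also have "\<dots> = of_real p * of_real s" using vv(1) iW by (simp add: mult.commute mult.left_commute)
      finally show ?thesis using xs 1 by (simp add: mult.commute)
    next
      case 2
      have "Z (2*m+3) j a = \<i> * (v0*cnj v1 + v1*cnj v0) * W"
        using Zpv[OF cliff2] 2 unfolding a_def W_def H2 by (simp add: v01)
      also have "\<dots> = of_real q * of_real s" using vv(2) iW by (simp add: mult.commute mult.left_commute)
      finally show ?thesis using xs 2 by (simp add: mult.commute)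
    next
      case 3
      have "Z (2*m+3) j a = \<i> * (\<i> * (v0*cnj v1 - v1*cnj v0)) * W"
        using Zpvn 3 unfolding a_def W_def H2 by (simp add: v01)
      also have "\<dots> = of_real u * of_real s" using vv(3) iW
        by (simp add: mult.commute mult.left_commute)
      finally show ?thesis using xs 3 by (simp add: mult.commute)
    next
      case 4
      have "Z (2*m+3) j a = of_real r * Z (2*m+1) (j-2) b"
        using Zmid[of j m v b] 4 unfolding a_def H2 by (simp add: v01 vv(4))
      also have "\<dots> = of_real (x (j - 2 + 2))" using xb 4 by (intro bspec[OF xb]) auto
      also have "j - 2 + 2 = j" using 4 by arith
      finally show ?thesis by simp
    qed
  qed
  moreover have "t = sqnorm (2^((2*m+3) div 2)) a"
  proof -
    have "complex_of_real (sqnorm (2^((2*m+3) div 2)) a) = of_real r * of_real (sqnorm (2^m) b)"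
      using sq_pv[of m v b] unfolding a_def H2 v01 vv(4) .
    then show ?thesis using tb by (metis of_real_eq_iff of_real_mult)
  qed
  ultimately show ?thesis by blast
qed

lemma sumlem: fixes k :: nat and f :: "nat \<Rightarrow> real" shows "(\<Sum>j=1..k+2. f j) = f 1 + f 2 + (\<Sum>j=1..k. f (j+2)::real)"
proof (induction k)
  case 0
  then show ?case by (simp add: numeral_2_eq_2)
next
  case (Suc k)
  have "(\<Sum>j=1..Suc k+2. f j) = (\<Sum>j=1..k+2. f j) + f (Suc k + 2)"
    by (simp add: sum.cl_ivl_Suc)
  then show ?case using Suc by (simp add: sum.cl_ivl_Suc)
qed

lemma n3: "Suc (Suc (Suc (2*m))) = 2*m+3" by simp

lemma sumlem2: fixes m :: nat and f :: "nat \<Rightarrow> real" shows "(\<Sum>j=1..2*m+3. f j) = f 1 + f 2 + (\<Sum>j=1..2*m. f (j+2)) + (f (2*m+3)::real)"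
proof -
  have "(\<Sum>j=1..2*m+3. f j) = (\<Sum>j=1..(2*m+1)+2. f j)"
    by (metis add.assoc numeral_Bit1 numeral_One one_add_one)
  also have "\<dots> = f 1 + f 2 + (\<Sum>j=1..2*m+1. f (j+2))" by (rule sumlem)
  also have "(\<Sum>j=1..2*m+1. f (j+2)) = (\<Sum>j=1..2*m. f (j+2)) + f (2*m+3)"
    by (simp add: sum.cl_ivl_Suc numeral_3_eq_3)
  finally show ?thesis by simp
qed

lemma odd_case:
  "\<forall>t x. t \<ge> 0 \<longrightarrow> (\<Sum>j=1..2*m+3. (x j)^2) = t^2 \<longrightarrow>
     (\<exists>a. (\<forall>j\<in>{1..2*m+3}. complex_of_real (x j) = Z (2*m+3) j a) \<and> t = sqnorm (2^((2*m+3) div 2)) a)"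
proof (induction m)
  case 0
  show ?case
  proof (intro allI impI)
    fix t :: real and x :: "nat \<Rightarrow> real"
    assume t: "t \<ge> 0" and hs: "(\<Sum>j=1..2*0+3. (x j)^2) = t^2"
    define b :: cvec where "b = (\<lambda>_. 1)"
    have 1: "t = t * sqnorm (2^0) b" unfolding b_def sqnorm_def by simp
    have 2: "Z (2*0+1) (2*0+1) b = of_real (-1)"
      unfolding Z_def b_def cliff_def mat_vec_def herm_def by simp
    have 3: "\<forall>j\<in>{1..2*0}. of_real t * Z (2*0+1) j b = of_real (x (j+2))" by simp
    have 4: "(x 1)^2 + (x 2)^2 + (x (2*0+3))^2 = (-1)^2 * t^2"
      using hs unfolding sumlem2[where m=0 and f="\<lambda>j. (x j)^2"] by simp
    show "\<exists>a. (\<forall>j\<in>{1..2*0+3}. complex_of_real (x j) = Z (2*0+3) j a) \<and> t = sqnorm (2^((2*0+3) div 2)) a"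
      by (rule step[OF t 1 2 3 4])
  qed
next
  case (Suc m)
  show ?case
  proof (intro allI impI)
    fix t :: real and x :: "nat \<Rightarrow> real"
    assume t: "t \<ge> 0" and hs: "(\<Sum>j=1..2*Suc m+3. (x j)^2) = t^2"
    define s where "s = sqrt ((x 1)^2 + (x 2)^2 + (x (2*Suc m+3))^2)"
    have s2: "s^2 = (x 1)^2 + (x 2)^2 + (x (2*Suc m+3))^2" unfolding s_def by simp
    define x' where "x' = (\<lambda>j. if j = 2*m+3 then s else x (j+2))"
    have e1: "(\<Sum>j=1..2*m+3. (x' j)^2) = (\<Sum>j=1..2*m+2. (x (j+2))^2) + s^2"
    proof -
      have "2*m+3 = Suc (2*m+2)" by simp
      then have "(\<Sum>j=1..2*m+3. (x' j)^2) = (\<Sum>j=1..2*m+2. (x' j)^2) + (x' (2*m+3))^2"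
        by (simp only: sum.cl_ivl_Suc) simp
      moreover have "(\<Sum>j=1..2*m+2. (x' j)^2) = (\<Sum>j=1..2*m+2. (x (j+2))^2)"
        by (rule sum.cong) (auto simp: x'_def)
      ultimately show ?thesis by (simp add: x'_def)
    qed
    have "(\<Sum>j=1..2*Suc m+3. (x j)^2) = (x 1)^2 + (x 2)^2 + (\<Sum>j=1..2*Suc m. (x (j+2))^2) + (x (2*Suc m+3))^2"
      by (rule sumlem2)
    then have "(\<Sum>j=1..2*m+3. (x' j)^2) = t^2" using hs e1 s2 by simp
    with Suc.IH t obtain b where
      hb: "\<forall>j\<in>{1..2*m+3}. complex_of_real (x' j) = Z (2*m+3) j b" and
      tb: "t = sqnorm (2^((2*m+3) div 2)) b" by blast
    have 1: "t = 1 * sqnorm (2^Suc m) b" using tb by simp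
    have 2: "Z (2*Suc m+1) (2*Suc m+1) b = of_real s"
      using bspec[OF hb, of "2*m+3"] by (simp add: x'_def n3)
    have 3: "\<forall>j\<in>{1..2*Suc m}. of_real 1 * Z (2*Suc m+1) j b = of_real (x (j+2))"
    proof
      fix j assume "j \<in> {1..2*Suc m}"
      then have "j \<in> {1..2*m+3}" "j \<noteq> 2*m+3" by auto
      then show "of_real 1 * Z (2*Suc m+1) j b = of_real (x (j+2))"
        using bspec[OF hb, of j] by (simp add: x'_def numeral_3_eq_3)
    qed
    have 4: "(x 1)^2 + (x 2)^2 + (x (2*Suc m+3))^2 = s^2 * 1^2" using s2 by simp
    show "\<exists>a. (\<forall>j\<in>{1..2*Suc m+3}. complex_of_real (x j) = Z (2*Suc m+3) j a) \<and> t = sqnorm (2^((2*Suc m+3) div 2)) a"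
      by (rule step[OF _ 1 2 3 4]) simp
  qed
qed

lemma cliff_ev: "j \<le> 2*m+2 \<Longrightarrow> cliff (2*m+2) j = cliff (2*m+3) j"
proof -
  assume j: "j \<le> 2*m+2"
  have a: "(2*m+2) div 2 = Suc m" "(2*m+3) div 2 = Suc m" by simp_all
  have b: "\<not> odd (2*m+2)" "j \<noteq> 2*m+3" using j by simp_all
  show ?thesis unfolding cliff_def Let_def a using b by simp
qed

theorem proposition2p4:
  fixes n :: nat and t :: real and x :: "nat \<Rightarrow> real"
  assumes "n \<ge> 2"
    and "future_null n t x"
  shows "\<exists>a :: cvec.
           (\<forall>j\<in>{1..n}. complex_of_real (x j)
                = herm (2 ^ (n div 2)) (mat_vec (2 ^ (n div 2)) (\<lambda>p q. \<i> * cliff n j p q) a) a)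
         \<and> t = sqnorm (2 ^ (n div 2)) a"
proof -
  from assms(2) have sx: "(\<Sum>j=1..n. (x j)^2) = t^2" and t: "t \<ge> 0"
    unfolding future_null_def by auto
  show ?thesis
  proof (cases "odd n")
    case True
    define m where "m = (n-3) div 2"
    have n: "n = 2*m+3" using True assms(1) unfolding m_def by presburger
    show ?thesis using odd_case[of m] t sx unfolding n Z_def by blast
  next
    case False
    define m where "m = (n-2) div 2"
    have n: "n = 2*m+2" using False assms(1) unfolding m_def by presburger
    define y where "y = x(2*m+3 := 0)"
    have "(\<Sum>j=1..2*m+3. (y j)^2) = (\<Sum>j=1..2*m+2. (y j)^2) + (y (2*m+3))^2"
      by (simp add: numeral_3_eq_3 sum.cl_ivl_Suc)
    also have "(\<Sum>j=1..2*m+2. (y j)^2) = (\<Sum>j=1..2*m+2. (x j)^2)"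
      by (rule sum.cong) (auto simp: y_def)
    finally have "(\<Sum>j=1..2*m+3. (y j)^2) = t^2" using sx n by (simp add: y_def)
    then obtain a where ha: "\<forall>j\<in>{1..2*m+3}. complex_of_real (y j) = Z (2*m+3) j a"
      and ta: "t = sqnorm (2^((2*m+3) div 2)) a" using odd_case[of m] t by blast
    have d: "(2*m+3) div 2 = (2*m+2) div 2" by simp
    have "\<forall>j\<in>{1..n}. complex_of_real (x j)
                = herm (2 ^ (n div 2)) (mat_vec (2 ^ (n div 2)) (\<lambda>p q. \<i> * cliff n j p q) a) a"
    proof
      fix j assume j: "j \<in> {1..n}"
      then have "complex_of_real (y j) = Z (2*m+3) j a" using ha n by auto
      moreover have "y j = x j" using j n by (simp add: y_def)
      moreover have "cliff n j = cliff (2*m+3) j" using j n cliff_ev by auto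
      ultimately show "complex_of_real (x j)
                = herm (2 ^ (n div 2)) (mat_vec (2 ^ (n div 2)) (\<lambda>p q. \<i> * cliff n j p q) a) a"
        unfolding Z_def d n by simp
    qed
    then show ?thesis using ta unfolding d n by blast
  qed
qed

end
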